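(* Let $D=[0,1]^2\setminus\{(0,0),(1,1)\}$ and let $J\colon D\to\mathbb{R}$ be a Jamesian function. Suppose there is a function $w\colon(0,1)\to(0,\infty)$ such that \[ J(a,b)=\frac{w(a)}{w(a)+w(b)}\quad\text{for all }a,b\in(0,1) \] (i.e. $J$ is derived from the Bradley--Terry model with worths depending on the winning percentages). Then $J$ coincides on all of $D$ with the James function $P(a,b)=\dfrac{a(1-b)}{a(1-b)+b(1-a)}$.
   Context: Let $D=[0,1]^2\setminus\{(0,0),(1,1)\}$. A function $J\colon D\to\mathbb{R}$ is called Jamesian if it satisfies, for all $(a,b)\in D$: (a) $J(a,\tfrac12)=a$; (b) $J(a,0)=1$ for $0<a\le 1$; (c) $J(b,a)=1-J(a,b)$; (d) $J(1-b,1-a)=J(a,b)$; (e) $J(a,b)$ is a non-decreasing function of $a$ for each $0\le b\le 1$ and a strictly increasing function of $a$ for each $0<b<1$. *)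

theory Defs
  imports Complex_Main
begin

definition jdom :: "(real \<times> real) set" where
  "jdom = ({0..1} \<times> {0..1}) - {(0,0),(1,1)}"

text \<open>A Jamesian function, J : D -> R, represented as a curried real function whose
  values outside D are irrelevant.\<close>
definition jamesian :: "(real \<Rightarrow> real \<Rightarrow> real) \<Rightarrow> bool" where
  "jamesian J \<longleftrightarrow>
     (\<forall>a\<in>{0..1}. J a (1/2) = a) \<and>
     (\<forall>a. 0 < a \<and> a \<le> 1 \<longrightarrow> J a 0 = 1) \<and>
     (\<forall>(a,b)\<in>jdom. J b a = 1 - J a b) \<and>
     (\<forall>(a,b)\<in>jdom. J (1 - b) (1 - a) = J a b) \<and>
     (\<forall>b\<in>{0..1}. mono_on {a. (a,b) \<in> jdom} (\<lambda>a. J a b)) \<and>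
     (\<forall>b\<in>{0<..<1}. strict_mono_on {a. (a,b) \<in> jdom} (\<lambda>a. J a b))"

definition james_fun :: "real \<Rightarrow> real \<Rightarrow> real" where
  "james_fun a b = a * (1 - b) / (a * (1 - b) + b * (1 - a))"

end

theory Submission
  imports Defs
begin

theorem proposition4p1:
  fixes J :: "real \<Rightarrow> real \<Rightarrow> real" and w :: "real \<Rightarrow> real"
  assumes "jamesian J"
    and "\<forall>a\<in>{0<..<1}. w a > 0"
    and "\<forall>a\<in>{0<..<1}. \<forall>b\<in>{0<..<1}. J a b = w a / (w a + w b)"
  shows "\<forall>(a,b)\<in>jdom. J a b = james_fun a b"
proof -
  have A: "\<And>a. a\<in>{0..1} \<Longrightarrow> J a (1/2) = a" and
       B: "\<And>a. 0 < a \<Longrightarrow> a \<le> 1 \<Longrightarrow> J a 0 = 1" and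
       C: "\<And>a b. (a,b)\<in>jdom \<Longrightarrow> J b a = 1 - J a b" and
       Dd: "\<And>a b. (a,b)\<in>jdom \<Longrightarrow> J (1 - b) (1 - a) = J a b"
    using assms(1) unfolding jamesian_def by auto
  define c where "c = w (1/2)"
  have c: "c > 0" using assms(2) c_def by auto
  have W: "w a = c * a / (1 - a)" if "0 < a" "a < 1" for a
  proof -
    have wa: "w a > 0" using assms(2) that by auto
    have "a = w a / (w a + c)" using A[of a] assms(3) that c_def by auto
    hence "a * (w a + c) = w a" using wa c by (simp add: field_simps)
    hence "w a * (1 - a) = c * a" by (simp add: algebra_simps)
    thus ?thesis using that by (simp add: field_simps)
  qed
  show ?thesis
  proof (clarify)
    fix a b assume ab: "(a,b) \<in> jdom"
    hence r: "0 \<le> a" "a \<le> 1" "0 \<le> b" "b \<le> 1" "\<not>(a=0 \<and> b=0)" "\<not>(a=1 \<and> b=1)"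
      unfolding jdom_def by auto
    show "J a b = james_fun a b"
    proof (cases "b = 0")
      case True thus ?thesis using r B[of a] by (auto simp: james_fun_def)
    next
      case b0: False
      show ?thesis
      proof (cases "a = 0")
        case True
        have "(b,0) \<in> jdom" using r b0 unfolding jdom_def by auto
        from C[OF this] B[of b] r b0 True show ?thesis by (simp add: james_fun_def)
      next
        case a0: False
        show ?thesis
        proof (cases "b = 1")
          case True
          have "(1-a,0) \<in> jdom" "(0,1-a) \<in> jdom" using r a0 True unfolding jdom_def by auto
          with C[of "1-a" 0] B[of "1-a"] Dd[of a b] ab r a0 True
          show ?thesis by (simp add: james_fun_def)
        next
          case b1: False
          show ?thesis
          proof (cases "a = 1")
            case True
            have "(b,1) \<in> jdom" using r b1 unfolding jdom_def by auto
            have "(1,1-b) \<in> jdom" using r b0 unfolding jdom_def by auto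
            have "(1-b,0) \<in> jdom" using r b1 b0 unfolding jdom_def by auto
            have "J b 1 = 0" using Dd[OF \<open>(b,1)\<in>jdom\<close>] C[OF \<open>(1-b,0)\<in>jdom\<close>] B[of "1-b"] r b1 by simp
            with C[OF \<open>(b,1)\<in>jdom\<close>] True b1 r show ?thesis by (simp add: james_fun_def)
          next
            case a1: False
            have ia: "0<a" "a<1" and ib: "0<b" "b<1" using r a0 a1 b0 b1 by auto
            have "J a b = w a / (w a + w b)" using assms(3) ia ib by auto
            also have "\<dots> = (c*a/(1-a)) / (c*a/(1-a) + c*b/(1-b))" using W ia ib by simp
            also have "\<dots> = (c*(a*(1-b))) / (c*(a*(1-b) + b*(1-a)))"
            proof -
              have p1: "1 - a > 0" "1 - b > 0" using ia ib by auto
              have xx: "c*a/(1-a) > 0" "c*b/(1-b) > 0" using ia ib c p1 by auto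
              have M: "c*(a*(1-b) + b*(1-a)) > 0" using ia ib c p1 by (intro mult_pos_pos add_pos_pos) auto
              have e1: "c*a/(1-a) * (1-a) = c*a" "c*b/(1-b) * (1-b) = c*b" using p1 by auto
              have "(c*a/(1-a)) * (c*(a*(1-b) + b*(1-a))) = (c*(a*(1-b))) * (c*a/(1-a) + c*b/(1-b))"
              proof -
                define x where "x = c*a/(1-a)"
                define y where "y = c*b/(1-b)"
                have ex: "x*(1-a) = c*a" and ey: "y*(1-b) = c*b" using e1 x_def y_def by auto
                have "x * (c*(a*(1-b) + b*(1-a))) = c*(1-b)*(x*a) + c*b*(x*(1-a))" by (simp add: algebra_simps)
                also have "\<dots> = c*(1-b)*(x*a) + c*b*(c*a)" using ex by simp
                also have "\<dots> = c*(1-b)*(x*a) + c*a*(y*(1-b))" using ey by simp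
                also have "\<dots> = (c*(a*(1-b))) * (x + y)" by (simp add: algebra_simps)
                finally show ?thesis using x_def y_def by simp
              qed
              moreover have "c*a/(1-a) + c*b/(1-b) \<noteq> 0" using xx by linarith
              moreover have "c*(a*(1-b) + b*(1-a)) \<noteq> 0" using M by linarith
              ultimately show ?thesis by (metis frac_eq_eq)
            qed
            also have "\<dots> = james_fun a b" using c unfolding james_fun_def
              by (simp only: mult_divide_mult_cancel_left_if) simp
            finally show ?thesis .
          qed
        qed
      qed
    qed
  qed
qed

end
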